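(* Let ${\bf B}$ and ${\bf C}$ be $n\times n$ matrices with non-negative entries, and let ${\bf A}$ be an $n\times n$ complex matrix satisfying $|[{\bf A}]_{i,j}|\le\sqrt{[{\bf B}]_{i,j}}\sqrt{[{\bf C}]_{i,j}}$ for all $i,j$. Then $\rho({\bf A})\le\sqrt{\rho({\bf B})}\sqrt{\rho({\bf C})}$. If furthermore $\max(\rho({\bf B}),\rho({\bf C}))<1$, then $\rho({\bf A})<1$ and $$\|({\bf I}_n-{\bf A})^{-1}\|_\infty\le\sqrt{\|({\bf I}_n-{\bf B})^{-1}\|_\infty}\sqrt{\|({\bf I}_n-{\bf C})^{-1}\|_\infty}.$$
   Context: $\rho(\cdot)$ denotes the spectral radius and $\|{\bf M}\|_\infty=\max_i\sum_j|M_{ij}|$. *)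

theory Defs
  imports "Jordan_Normal_Form.Spectral_Radius"
begin

definition inf_norm :: "'a :: real_normed_vector mat \<Rightarrow> real" where
  "inf_norm M = Max {(\<Sum>j<dim_col M. norm (M $$ (i, j))) | i. i < dim_row M}"

text \<open>The (two-sided) inverse of a square matrix (unspecified if it does not exist).\<close>
definition inv_mat :: "'a :: field mat \<Rightarrow> 'a mat" where
  "inv_mat M = (THE X. X \<in> carrier_mat (dim_row M) (dim_row M) \<and>
                       M * X = 1\<^sub>m (dim_row M) \<and> X * M = 1\<^sub>m (dim_row M))"

end

theory Submission
  imports Defs "HOL-Analysis.Analysis"
begin

lemma cs_sum:
  fixes p q :: "'i \<Rightarrow> real"
  assumes "\<And>i. i \<in> I \<Longrightarrow> p i \<ge> 0" "\<And>i. i \<in> I \<Longrightarrow> q i \<ge> 0"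
  shows "(\<Sum>i\<in>I. sqrt (p i) * sqrt (q i)) \<le> sqrt (\<Sum>i\<in>I. p i) * sqrt (\<Sum>i\<in>I. q i)"
proof -
  have "(\<Sum>i\<in>I. sqrt (p i) * sqrt (q i))\<^sup>2 \<le> (\<Sum>i\<in>I. (sqrt (p i))\<^sup>2) * (\<Sum>i\<in>I. (sqrt (q i))\<^sup>2)"
    by (rule Cauchy_Schwarz_ineq_sum)
  also have "(\<Sum>i\<in>I. (sqrt (p i))\<^sup>2) = (\<Sum>i\<in>I. p i)"
    using assms(1) by (intro sum.cong) auto
  also have "(\<Sum>i\<in>I. (sqrt (q i))\<^sup>2) = (\<Sum>i\<in>I. q i)"
    using assms(2) by (intro sum.cong) auto
  finally have "(\<Sum>i\<in>I. sqrt (p i) * sqrt (q i)) \<le> sqrt ((\<Sum>i\<in>I. p i) * (\<Sum>i\<in>I. q i))"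
    by (rule real_le_rsqrt)
  then show ?thesis by (simp add: real_sqrt_mult)
qed


lemma pow_Suc_entry:
  fixes M :: "'a::comm_semiring_1 mat"
  assumes "M \<in> carrier_mat n n" "i < n" "j < n"
  shows "(M ^\<^sub>m Suc k) $$ (i, j) = (\<Sum>l<n. (M ^\<^sub>m k) $$ (i, l) * M $$ (l, j))"
  using assms by (simp add: scalar_prod_def lessThan_atLeast0 row_def col_def)

lemma pow_bound:
  fixes A :: "complex mat" and B C :: "real mat"
  assumes A: "A \<in> carrier_mat n n" and B: "B \<in> carrier_mat n n" and C: "C \<in> carrier_mat n n"
    and Bn: "\<And>i j. i < n \<Longrightarrow> j < n \<Longrightarrow> B $$ (i, j) \<ge> 0"
    and Cn: "\<And>i j. i < n \<Longrightarrow> j < n \<Longrightarrow> C $$ (i, j) \<ge> 0"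
    and AB: "\<And>i j. i < n \<Longrightarrow> j < n \<Longrightarrow>
           norm (A $$ (i, j)) \<le> sqrt (B $$ (i, j)) * sqrt (C $$ (i, j))"
  shows "\<forall>i j. i < n \<longrightarrow> j < n \<longrightarrow> (B ^\<^sub>m k) $$ (i, j) \<ge> 0 \<and> (C ^\<^sub>m k) $$ (i, j) \<ge> 0 \<and>
     norm ((A ^\<^sub>m k) $$ (i, j)) \<le> sqrt ((B ^\<^sub>m k) $$ (i, j)) * sqrt ((C ^\<^sub>m k) $$ (i, j))"
proof (induction k)
  case 0
  then show ?case using A B C by auto
next
  case (Suc k)
  show ?case
  proof (intro allI impI)
    fix i j assume i: "i < n" and j: "j < n"
    have b: "(B ^\<^sub>m Suc k) $$ (i, j) = (\<Sum>l<n. (B ^\<^sub>m k) $$ (i, l) * B $$ (l, j))"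
      by (rule pow_Suc_entry[OF B i j])
    have c: "(C ^\<^sub>m Suc k) $$ (i, j) = (\<Sum>l<n. (C ^\<^sub>m k) $$ (i, l) * C $$ (l, j))"
      by (rule pow_Suc_entry[OF C i j])
    have a: "(A ^\<^sub>m Suc k) $$ (i, j) = (\<Sum>l<n. (A ^\<^sub>m k) $$ (i, l) * A $$ (l, j))"
      by (rule pow_Suc_entry[OF A i j])
    have nb: "(B ^\<^sub>m Suc k) $$ (i, j) \<ge> 0" unfolding b
      using Suc i Bn j by (intro sum_nonneg mult_nonneg_nonneg) auto
    have nc: "(C ^\<^sub>m Suc k) $$ (i, j) \<ge> 0" unfolding c
      using Suc i Cn j by (intro sum_nonneg mult_nonneg_nonneg) auto
    have "norm ((A ^\<^sub>m Suc k) $$ (i, j)) \<le> (\<Sum>l<n. norm ((A ^\<^sub>m k) $$ (i, l)) * norm (A $$ (l, j)))"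
      unfolding a by (rule order.trans[OF norm_sum]) (simp add: norm_mult)
    also have "\<dots> \<le> (\<Sum>l<n. (sqrt ((B ^\<^sub>m k) $$ (i, l)) * sqrt ((C ^\<^sub>m k) $$ (i, l))) *
                              (sqrt (B $$ (l, j)) * sqrt (C $$ (l, j))))"
      using Suc i j AB by (intro sum_mono mult_mono) auto
    also have "\<dots> = (\<Sum>l<n. sqrt ((B ^\<^sub>m k) $$ (i, l) * B $$ (l, j)) * sqrt ((C ^\<^sub>m k) $$ (i, l) * C $$ (l, j)))"
      by (simp add: real_sqrt_mult mult_ac)
    also have "\<dots> \<le> sqrt (\<Sum>l<n. (B ^\<^sub>m k) $$ (i, l) * B $$ (l, j)) * sqrt (\<Sum>l<n. (C ^\<^sub>m k) $$ (i, l) * C $$ (l, j))"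
      using Suc i Bn Cn j by (intro cs_sum mult_nonneg_nonneg) auto
    finally show "(B ^\<^sub>m Suc k) $$ (i, j) \<ge> 0 \<and> (C ^\<^sub>m Suc k) $$ (i, j) \<ge> 0 \<and>
     norm ((A ^\<^sub>m Suc k) $$ (i, j)) \<le> sqrt ((B ^\<^sub>m Suc k) $$ (i, j)) * sqrt ((C ^\<^sub>m Suc k) $$ (i, j))"
      using nb nc b c by simp
  qed
qed

lemma smult_pow_mat:
  fixes M :: "'a::comm_ring_1 mat"
  assumes "M \<in> carrier_mat n n"
  shows "(a \<cdot>\<^sub>m M) ^\<^sub>m k = a ^ k \<cdot>\<^sub>m (M ^\<^sub>m k)"
proof (induction k)
  case 0
  then show ?case using assms by (auto intro!: eq_matI)
next
  case (Suc k)
  have "(a \<cdot>\<^sub>m M) ^\<^sub>m Suc k = (a ^ k \<cdot>\<^sub>m (M ^\<^sub>m k)) * (a \<cdot>\<^sub>m M)" using Suc by simp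
  also have "\<dots> = a ^ Suc k \<cdot>\<^sub>m (M ^\<^sub>m Suc k)"
    using assms by (intro eq_matI) (auto simp: scalar_prod_def sum_distrib_left mult_ac)
  finally show ?case .
qed

lemma decay:
  fixes M :: "complex mat"
  assumes M: "M \<in> carrier_mat n n" and n: "n > 0" and r: "spectral_radius M < r"
  shows "\<exists>c. \<forall>k i j. i < n \<longrightarrow> j < n \<longrightarrow> norm ((M ^\<^sub>m k) $$ (i, j)) \<le> c * r ^ k"
proof -
  have r0: "r > 0" using spectral_radius_mem_max(1)[OF M n] r
    by (smt (verit, best) image_iff norm_ge_zero)
  define M' where "M' = complex_of_real (1 / r) \<cdot>\<^sub>m M"
  have M': "M' \<in> carrier_mat n n" unfolding M'_def using M by auto
  have MM: "M = complex_of_real r \<cdot>\<^sub>m M'"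
    unfolding M'_def using M r0 by (intro eq_matI) auto
  have "spectral_radius M' < 1"
  proof -
    obtain mu where mu: "mu \<in> spectrum M'" and eq: "spectral_radius M' = norm mu"
      using spectral_radius_mem_max(1)[OF M' n] by auto
    from mu obtain v where ev: "eigenvector M' v mu"
      unfolding spectrum_def eigenvalue_def by auto
    have "M *\<^sub>v v = (complex_of_real r * mu) \<cdot>\<^sub>v v"
    proof -
      have v: "v \<in> carrier_vec n" and eq2: "M' *\<^sub>v v = mu \<cdot>\<^sub>v v"
        using ev M' unfolding eigenvector_def by auto
      have "M *\<^sub>v v = complex_of_real r \<cdot>\<^sub>v (M' *\<^sub>v v)"
        unfolding MM using M' v by (intro eq_vecI) auto
      then show ?thesis using eq2 by (auto simp: smult_smult_assoc)
    qed
    then have "eigenvector M v (complex_of_real r * mu)"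
      using ev M M' unfolding eigenvector_def by auto
    then have "norm (complex_of_real r * mu) \<in> norm ` spectrum M"
      unfolding spectrum_def eigenvalue_def by auto
    from spectral_radius_mem_max(2)[OF M n this] r
    have a: "r * norm mu \<le> spectral_radius M" using r0 by (simp add: norm_mult)
    have "norm mu < 1"
    proof (rule ccontr)
      assume "\<not> norm mu < 1"
      then have "r * 1 \<le> r * norm mu" using r0 by (intro mult_left_mono) auto
      with a r show False by linarith
    qed
    then show ?thesis using eq by simp
  qed
  from spectral_radius_jnf_norm_bound_less_1_upper_triangular[OF M' this]
  obtain c where c: "\<And>k. norm_bound (M' ^\<^sub>m k) c" by auto
  show ?thesis
  proof (intro exI allI impI)
    fix k i j assume i: "i < n" and j: "j < n"
    have "(M ^\<^sub>m k) $$ (i, j) = complex_of_real r ^ k * (M' ^\<^sub>m k) $$ (i, j)"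
      unfolding MM smult_pow_mat[OF M'] using i j M' by simp
    then have "norm ((M ^\<^sub>m k) $$ (i, j)) = r ^ k * norm ((M' ^\<^sub>m k) $$ (i, j))"
      using r0 by (simp add: norm_mult norm_power)
    also have "\<dots> \<le> r ^ k * c"
      using c[of k] i j M' r0 unfolding norm_bound_def by (intro mult_left_mono) auto
    finally show "norm ((M ^\<^sub>m k) $$ (i, j)) \<le> c * r ^ k" by (simp add: mult_ac)
  qed
qed

lemma invertible_lt1:
  fixes M :: "complex mat"
  assumes M: "M \<in> carrier_mat n n" and n: "n > 0" and r: "spectral_radius M < 1"
  shows "Determinant.det (1\<^sub>m n - M) \<noteq> 0"
proof
  assume "Determinant.det (1\<^sub>m n - M) = 0"
  then obtain v where v: "v \<in> carrier_vec n" "v \<noteq> 0\<^sub>v n" "(1\<^sub>m n - M) *\<^sub>v v = 0\<^sub>v n"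
    using det_0_iff_vec_prod_zero[of "1\<^sub>m n - M" n] M by (meson minus_carrier_mat one_carrier_mat)
  have e: "v - M *\<^sub>v v = 0\<^sub>v n"
    using v(3) minus_mult_distrib_mat_vec[OF one_carrier_mat M v(1)] v(1) by simp
  have "M *\<^sub>v v = v"
  proof (rule eq_vecI)
    fix i assume i: "i < dim_vec v"
    then have "(v - M *\<^sub>v v) $ i = 0" using e v M by simp
    then show "(M *\<^sub>v v) $ i = v $ i" using i M v by simp
  next
    show "dim_vec (M *\<^sub>v v) = dim_vec v" using M v by simp
  qed
  then have "eigenvector M v 1" using v M unfolding eigenvector_def by auto
  then have "(1::complex) \<in> spectrum M"
    unfolding spectrum_def eigenvalue_def by auto
  then have "norm (1::complex) \<in> norm ` spectrum M" by (rule imageI)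
  from spectral_radius_mem_max(2)[OF M n this] r show False by simp
qed

lemma inv_mat_eq:
  fixes M X :: "'a::field mat"
  assumes M: "M \<in> carrier_mat n n" and X: "X \<in> carrier_mat n n"
    and MX: "M * X = 1\<^sub>m n" and XM: "X * M = 1\<^sub>m n"
  shows "inv_mat M = X"
  unfolding inv_mat_def
proof (rule the_equality)
  show "X \<in> carrier_mat (dim_row M) (dim_row M) \<and> M * X = 1\<^sub>m (dim_row M) \<and> X * M = 1\<^sub>m (dim_row M)"
    using M X MX XM by auto
  fix Y assume Y: "Y \<in> carrier_mat (dim_row M) (dim_row M) \<and> M * Y = 1\<^sub>m (dim_row M) \<and> Y * M = 1\<^sub>m (dim_row M)"
  then have Y': "Y \<in> carrier_mat n n" "Y * M = 1\<^sub>m n" using M by auto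
  have "Y = Y * (M * X)" using Y' MX by simp
  also have "\<dots> = (Y * M) * X" by (rule assoc_mult_mat[OF Y'(1) M X, symmetric])
  also have "\<dots> = X" unfolding Y'(2) using X by (simp only: left_mult_one_mat)
  finally show "Y = X" .
qed

lemma det_inverse:
  fixes M :: "'a::field mat"
  assumes M: "M \<in> carrier_mat n n" and d: "Determinant.det M \<noteq> 0"
  shows "\<exists>X. X \<in> carrier_mat n n \<and> M * X = 1\<^sub>m n \<and> X * M = 1\<^sub>m n"
proof -
  from det_non_zero_imp_unit[OF M d, of "()"]
  show ?thesis unfolding Units_def ring_mat_def by auto
qed

lemma invertible_from:
  fixes M X :: "'a::field mat"
  assumes M: "M \<in> carrier_mat n n" and X: "X \<in> carrier_mat n n"
    and MX: "M * X = 1\<^sub>m n" and XM: "X * M = 1\<^sub>m n"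
  shows "invertible_mat M"
  unfolding invertible_mat_def inverts_mat_def using M X MX XM by auto

lemma mult_entry:
  fixes P Q :: "'a::comm_semiring_1 mat"
  assumes "P \<in> carrier_mat n n" "Q \<in> carrier_mat n n" "i < n" "j < n"
  shows "(P * Q) $$ (i, j) = (\<Sum>l<n. P $$ (i, l) * Q $$ (l, j))"
  using assms by (simp add: scalar_prod_def lessThan_atLeast0 row_def col_def)

lemma neumann:
  fixes M X :: "'a::real_normed_field mat"
  assumes M: "M \<in> carrier_mat n n" and X: "X \<in> carrier_mat n n"
    and inv: "(1\<^sub>m n - M) * X = 1\<^sub>m n"
    and bnd: "\<forall>k i j. i < n \<longrightarrow> j < n \<longrightarrow> norm ((M ^\<^sub>m k) $$ (i, j)) \<le> c * r ^ k"
    and r: "0 \<le> r" "r < 1" and i: "i < n" and j: "j < n"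
  shows "(\<lambda>N. \<Sum>k<N. (M ^\<^sub>m k) $$ (i, j)) \<longlonglongrightarrow> X $$ (i, j)"
proof -
  have "(1\<^sub>m n - M) * X = 1\<^sub>m n * X - M * X"
    using M X by (intro minus_mult_distrib_mat) auto
  also have "\<dots> = X - M * X" using X by simp
  finally have e: "X - M * X = 1\<^sub>m n" using inv by simp
  have mx: "(M * X) $$ (a, b) = X $$ (a, b) - (if a = b then 1 else 0)" if "a < n" "b < n" for a b
  proof -
    have "(X - M * X) $$ (a, b) = 1\<^sub>m n $$ (a, b)" using e by simp
    then show ?thesis using that M X by (cases "a = b") (auto simp: algebra_simps)
  qed
  have key: "X $$ (i, j) - (\<Sum>k<N. (M ^\<^sub>m k) $$ (i, j)) = (M ^\<^sub>m N * X) $$ (i, j)" for N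
  proof (induction N)
    case 0
    then show ?case using i j X M by simp
  next
    case (Suc N)
    have "(M ^\<^sub>m Suc N * X) $$ (i, j) = (M ^\<^sub>m N * (M * X)) $$ (i, j)"
      using M X by (simp add: assoc_mult_mat[of _ n n _ n _ n])
    also have "\<dots> = (\<Sum>l<n. (M ^\<^sub>m N) $$ (i, l) * (M * X) $$ (l, j))"
      using M X i j by (intro mult_entry) auto
    also have "\<dots> = (\<Sum>l<n. (M ^\<^sub>m N) $$ (i, l) * X $$ (l, j) - (M ^\<^sub>m N) $$ (i, l) * (if l = j then 1 else 0))"
      using j by (intro sum.cong) (auto simp: mx right_diff_distrib)
    also have "\<dots> = (M ^\<^sub>m N * X) $$ (i, j) - (M ^\<^sub>m N) $$ (i, j)"
    proof -
      have s1: "(\<Sum>l<n. (M ^\<^sub>m N) $$ (i, l) * X $$ (l, j)) = (M ^\<^sub>m N * X) $$ (i, j)"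
        using M X i j by (intro mult_entry[symmetric]) auto
      have "(\<Sum>l<n. (M ^\<^sub>m N) $$ (i, l) * (if l = j then 1 else 0)) = (\<Sum>l<n. if l = j then (M ^\<^sub>m N) $$ (i, l) else 0)"
        by (intro sum.cong) auto
      also have "\<dots> = (M ^\<^sub>m N) $$ (i, j)" using j by (simp add: sum.delta)
      finally have s2: "(\<Sum>l<n. (M ^\<^sub>m N) $$ (i, l) * (if l = j then 1 else 0)) = (M ^\<^sub>m N) $$ (i, j)" .
      show ?thesis by (simp only: sum_subtractf s1 s2)
    qed
    finally show ?case using Suc by simp
  qed
  define K where "K = (\<Sum>l<n. norm (X $$ (l, j)))"
  have "(\<lambda>N. (M ^\<^sub>m N * X) $$ (i, j)) \<longlonglongrightarrow> 0"
  proof (rule Lim_null_comparison)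
    show "\<forall>\<^sub>F N in sequentially. norm ((M ^\<^sub>m N * X) $$ (i, j)) \<le> c * K * r ^ N"
    proof (rule always_eventually, rule allI)
      fix N
      have "norm ((M ^\<^sub>m N * X) $$ (i, j)) = norm (\<Sum>l<n. (M ^\<^sub>m N) $$ (i, l) * X $$ (l, j))"
        using mult_entry[of "M ^\<^sub>m N" n X i j] M X i j by simp
      also have "\<dots> \<le> (\<Sum>l<n. norm ((M ^\<^sub>m N) $$ (i, l)) * norm (X $$ (l, j)))"
        by (rule order.trans[OF norm_sum]) (simp add: norm_mult)
      also have "\<dots> \<le> (\<Sum>l<n. (c * r ^ N) * norm (X $$ (l, j)))"
        using bnd i by (intro sum_mono mult_right_mono) auto
      also have "\<dots> = c * K * r ^ N" unfolding K_def by (simp add: sum_distrib_left mult_ac)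
      finally show "norm ((M ^\<^sub>m N * X) $$ (i, j)) \<le> c * K * r ^ N" .
    qed
    show "(\<lambda>N. c * K * r ^ N) \<longlonglongrightarrow> 0"
      using r by (intro tendsto_mult_right_zero LIMSEQ_power_zero) auto
  qed
  then have "(\<lambda>N. X $$ (i, j) - (M ^\<^sub>m N * X) $$ (i, j)) \<longlonglongrightarrow> X $$ (i, j) - 0"
    by (intro tendsto_diff tendsto_const)
  moreover have "(\<lambda>N. X $$ (i, j) - (M ^\<^sub>m N * X) $$ (i, j)) = (\<lambda>N. \<Sum>k<N. (M ^\<^sub>m k) $$ (i, j))"
    using key by (auto simp: algebra_simps)
  ultimately show ?thesis by simp
qed

lemma map_pow_entry:
  fixes B :: "real mat"
  assumes B: "B \<in> carrier_mat n n" and i: "i < n" and j: "j < n"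
  shows "((map_mat complex_of_real B) ^\<^sub>m k) $$ (i, j) = complex_of_real ((B ^\<^sub>m k) $$ (i, j))"
proof -
  have "(map_mat complex_of_real B) ^\<^sub>m k = map_mat complex_of_real (B ^\<^sub>m k)"
    using of_real_hom.mat_hom_pow[OF B, of k] by (simp only: eq_commute)
  then show ?thesis using B i j by simp
qed

lemma real_decay:
  fixes B :: "real mat"
  assumes B: "B \<in> carrier_mat n n" and n: "n > 0" and r: "spectral_radius (map_mat complex_of_real B) < r"
  shows "\<exists>c. \<forall>k i j. i < n \<longrightarrow> j < n \<longrightarrow> norm ((B ^\<^sub>m k) $$ (i, j)) \<le> c * r ^ k"
proof -
  have Bc: "map_mat complex_of_real B \<in> carrier_mat n n" using B by auto
  from decay[OF Bc n r] obtain c where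
    c: "\<forall>k i j. i < n \<longrightarrow> j < n \<longrightarrow> norm (((map_mat complex_of_real B) ^\<^sub>m k) $$ (i, j)) \<le> c * r ^ k"
    by auto
  show ?thesis
    by (rule exI[of _ c]) (use c map_pow_entry[OF B] in auto)
qed

lemma real_det_ne0:
  fixes B :: "real mat"
  assumes B: "B \<in> carrier_mat n n" and n: "n > 0"
    and r: "spectral_radius (map_mat complex_of_real B) < 1"
  shows "Determinant.det (1\<^sub>m n - B) \<noteq> 0"
proof -
  have Bc: "map_mat complex_of_real B \<in> carrier_mat n n" using B by auto
  have "map_mat complex_of_real (1\<^sub>m n - B) = 1\<^sub>m n - map_mat complex_of_real B"
    using B by (intro eq_matI) auto
  then have "complex_of_real (Determinant.det (1\<^sub>m n - B)) = Determinant.det (1\<^sub>m n - map_mat complex_of_real B)"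
    by (metis of_real_hom.hom_det)
  with invertible_lt1[OF Bc n r] show ?thesis by auto
qed

lemma sr_nonneg:
  assumes "M \<in> carrier_mat n n" "n > 0"
  shows "spectral_radius M \<ge> 0"
  using spectral_radius_mem_max(1)[OF assms] by auto

lemma part1_core:
  fixes A :: "complex mat" and B C :: "real mat" and n :: nat
  assumes n: "n > 0"
    and A: "A \<in> carrier_mat n n" and B: "B \<in> carrier_mat n n" and C: "C \<in> carrier_mat n n"
    and Bn: "\<And>i j. i < n \<Longrightarrow> j < n \<Longrightarrow> B $$ (i, j) \<ge> 0"
    and Cn: "\<And>i j. i < n \<Longrightarrow> j < n \<Longrightarrow> C $$ (i, j) \<ge> 0"
    and AB: "\<And>i j. i < n \<Longrightarrow> j < n \<Longrightarrow>
           norm (A $$ (i, j)) \<le> sqrt (B $$ (i, j)) * sqrt (C $$ (i, j))"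
    and rb: "spectral_radius (map_mat complex_of_real B) < rb"
    and rc: "spectral_radius (map_mat complex_of_real C) < rc"
  shows "spectral_radius A \<le> sqrt rb * sqrt rc"
proof (rule ccontr)
  assume contra: "\<not> ?thesis"
  have Bc: "map_mat complex_of_real B \<in> carrier_mat n n" using B by auto
  have Cc: "map_mat complex_of_real C \<in> carrier_mat n n" using C by auto
  have rb0: "rb > 0" using sr_nonneg[OF Bc n] rb by linarith
  have rc0: "rc > 0" using sr_nonneg[OF Cc n] rc by linarith
  define t where "t = sqrt rb * sqrt rc"
  have t0: "t > 0" unfolding t_def using rb0 rc0 by simp
  note pb = pow_bound[OF A B C Bn Cn AB]
  obtain cb where cb: "\<forall>k i j. i < n \<longrightarrow> j < n \<longrightarrow> norm ((B ^\<^sub>m k) $$ (i, j)) \<le> cb * rb ^ k"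
    using real_decay[OF B n rb] by auto
  obtain cc where cc: "\<forall>k i j. i < n \<longrightarrow> j < n \<longrightarrow> norm ((C ^\<^sub>m k) $$ (i, j)) \<le> cc * rc ^ k"
    using real_decay[OF C n rc] by auto
  obtain lam where lam: "lam \<in> spectrum A" and eq: "spectral_radius A = norm lam"
    using spectral_radius_mem_max(1)[OF A n] by auto
  from lam obtain v where ev: "eigenvector A v lam"
    unfolding spectrum_def eigenvalue_def by auto
  have v: "v \<in> carrier_vec n" "v \<noteq> 0\<^sub>v n" using ev A unfolding eigenvector_def by auto
  obtain i where i: "i < n" "v $ i \<noteq> 0"
    using v by (metis carrier_vecD eq_vecI index_zero_vec(1) index_zero_vec(2))
  define V where "V = (\<Sum>j<n. norm (v $ j))"
  define K where "K = sqrt cb * sqrt cc * V / norm (v $ i)"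
  have lt: "t < norm lam" using contra eq unfolding t_def by simp
  have bound: "(norm lam / t) ^ k \<le> K" for k
  proof -
    have "(A ^\<^sub>m k *\<^sub>v v) $ i = (lam ^ k \<cdot>\<^sub>v v) $ i"
      using eigenvector_pow[OF A ev, of k] by simp
    then have e: "lam ^ k * v $ i = (\<Sum>j<n. (A ^\<^sub>m k) $$ (i, j) * v $ j)"
      using i v A by (simp add: scalar_prod_def lessThan_atLeast0 row_def)
    have "norm lam ^ k * norm (v $ i) = norm (\<Sum>j<n. (A ^\<^sub>m k) $$ (i, j) * v $ j)"
      using e by (metis norm_mult norm_power)
    also have "\<dots> \<le> (\<Sum>j<n. norm ((A ^\<^sub>m k) $$ (i, j)) * norm (v $ j))"
      by (rule order.trans[OF norm_sum]) (simp add: norm_mult)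
    also have "\<dots> \<le> (\<Sum>j<n. (sqrt (cb * rb ^ k) * sqrt (cc * rc ^ k)) * norm (v $ j))"
    proof (intro sum_mono mult_right_mono)
      fix j assume j: "j \<in> {..<n}"
      have "norm ((A ^\<^sub>m k) $$ (i, j)) \<le> sqrt ((B ^\<^sub>m k) $$ (i, j)) * sqrt ((C ^\<^sub>m k) $$ (i, j))"
        using pb i j by auto
      also have "\<dots> \<le> sqrt (cb * rb ^ k) * sqrt (cc * rc ^ k)"
      proof -
        have j': "j < n" using j by auto
        have b0: "(B ^\<^sub>m k) $$ (i, j) \<ge> 0" "(C ^\<^sub>m k) $$ (i, j) \<ge> 0" using pb i(1) j' by auto
        have b1: "(B ^\<^sub>m k) $$ (i, j) \<le> cb * rb ^ k" using cb[rule_format, OF i(1) j', of k] by simp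
        have c1: "(C ^\<^sub>m k) $$ (i, j) \<le> cc * rc ^ k" using cc[rule_format, OF i(1) j', of k] by simp
        show ?thesis using b0 b1 c1 by (intro mult_mono real_sqrt_le_mono) auto
      qed
      finally show "norm ((A ^\<^sub>m k) $$ (i, j)) \<le> sqrt (cb * rb ^ k) * sqrt (cc * rc ^ k)" .
    qed auto
    also have "\<dots> = sqrt cb * sqrt cc * t ^ k * V"
      unfolding V_def t_def by (simp add: sum_distrib_left real_sqrt_mult real_sqrt_power power_mult_distrib mult_ac)
    finally have "norm lam ^ k * norm (v $ i) \<le> sqrt cb * sqrt cc * t ^ k * V" .
    then show ?thesis using t0 i(2) unfolding K_def
      by (simp add: power_divide field_simps)
  qed
  have "1 < norm lam / t" using lt t0 by simp
  from real_arch_pow[OF this, of K] obtain k where "K < (norm lam / t) ^ k" by auto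
  with bound[of k] show False by simp
qed

lemma delta_arith:
  fixes a b c :: real
  assumes b: "b \<ge> 0" and c: "c \<ge> 0" and a: "a \<ge> 0"
    and h: "\<And>d. d > 0 \<Longrightarrow> a \<le> sqrt (b + d) * sqrt (c + d)"
  shows "a \<le> sqrt b * sqrt c"
proof (rule ccontr)
  assume "\<not> ?thesis"
  then have lt: "sqrt (b * c) < a" by (simp add: real_sqrt_mult)
  have "sqrt (b * c) < sqrt (a\<^sup>2)" using lt a by simp
  then have bc: "b * c < a\<^sup>2" by (simp only: real_sqrt_less_iff)
  define D where "D = a\<^sup>2 - b * c"
  have D: "D > 0" using bc unfolding D_def by simp
  define d where "d = min 1 (D / (b + c + 2))"
  have d0: "d > 0" unfolding d_def using D b c by simp
  have d1: "d \<le> 1" unfolding d_def by simp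
  have "d \<le> D / (b + c + 2)" unfolding d_def by simp
  then have d2: "d * (b + c + 2) \<le> D" using b c by (simp add: pos_le_divide_eq)
  have X: "(b + d) * (c + d) \<ge> 0" using b c d0 by simp
  have "a \<le> sqrt ((b + d) * (c + d))" using h[OF d0] by (simp add: real_sqrt_mult)
  then have "a\<^sup>2 \<le> (sqrt ((b + d) * (c + d)))\<^sup>2" using a by (intro power_mono) auto
  then have "a\<^sup>2 \<le> (b + d) * (c + d)" using X by simp
  moreover have "(b + d) * (c + d) = b * c + d * (b + c) + d * d" by (simp add: algebra_simps)
  moreover have "d * d \<le> d * 1" using d0 d1 by (intro mult_left_mono) auto
  ultimately have "a\<^sup>2 \<le> b * c + d * (b + c + 2) - d" by (simp add: algebra_simps)
  with d2 d0 show False unfolding D_def by linarith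
qed

lemma row_le_inf_norm:
  fixes X :: "'a::real_normed_vector mat"
  assumes "X \<in> carrier_mat n n" "i < n"
  shows "(\<Sum>j<n. norm (X $$ (i, j))) \<le> inf_norm X"
  unfolding inf_norm_def using assms by (intro Max_ge) auto

theorem lemma8:
  fixes A :: "complex mat" and B C :: "real mat" and n :: nat
  assumes "n > 0"
    and "A \<in> carrier_mat n n" and "B \<in> carrier_mat n n" and "C \<in> carrier_mat n n"
    and "\<And>i j. i < n \<Longrightarrow> j < n \<Longrightarrow> B $$ (i, j) \<ge> 0"
    and "\<And>i j. i < n \<Longrightarrow> j < n \<Longrightarrow> C $$ (i, j) \<ge> 0"
    and "\<And>i j. i < n \<Longrightarrow> j < n \<Longrightarrow>
           norm (A $$ (i, j)) \<le> sqrt (B $$ (i, j)) * sqrt (C $$ (i, j))"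
  shows "spectral_radius A \<le>
           sqrt (spectral_radius (map_mat complex_of_real B)) *
           sqrt (spectral_radius (map_mat complex_of_real C)) \<and>
         (max (spectral_radius (map_mat complex_of_real B))
             (spectral_radius (map_mat complex_of_real C)) < 1 \<longrightarrow>
           spectral_radius A < 1 \<and>
           invertible_mat (1\<^sub>m n - A) \<and> invertible_mat (1\<^sub>m n - B) \<and>
           invertible_mat (1\<^sub>m n - C) \<and>
           inf_norm (inv_mat (1\<^sub>m n - A)) \<le>
             sqrt (inf_norm (inv_mat (1\<^sub>m n - B))) * sqrt (inf_norm (inv_mat (1\<^sub>m n - C))))"
proof -
  note n = assms(1) and A = assms(2) and B = assms(3) and C = assms(4)
    and Bn = assms(5) and Cn = assms(6) and AB = assms(7)
  have Bc: "map_mat complex_of_real B \<in> carrier_mat n n" using B by auto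
  have Cc: "map_mat complex_of_real C \<in> carrier_mat n n" using C by auto
  define rB where "rB = spectral_radius (map_mat complex_of_real B)"
  define rC where "rC = spectral_radius (map_mat complex_of_real C)"
  define rA where "rA = spectral_radius A"
  have rB0: "rB \<ge> 0" unfolding rB_def by (rule sr_nonneg[OF Bc n])
  have rC0: "rC \<ge> 0" unfolding rC_def by (rule sr_nonneg[OF Cc n])
  have rA0: "rA \<ge> 0" unfolding rA_def by (rule sr_nonneg[OF A n])
  have P1: "rA \<le> sqrt rB * sqrt rC"
  proof (rule delta_arith[OF rB0 rC0 rA0])
    fix d :: real assume d: "d > 0"
    show "rA \<le> sqrt (rB + d) * sqrt (rC + d)"
      unfolding rA_def
      by (rule part1_core[OF n A B C Bn Cn AB]) (use d in \<open>auto simp: rB_def rC_def\<close>)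
  qed
  have P2: "rA < 1 \<and>
           invertible_mat (1\<^sub>m n - A) \<and> invertible_mat (1\<^sub>m n - B) \<and>
           invertible_mat (1\<^sub>m n - C) \<and>
           inf_norm (inv_mat (1\<^sub>m n - A)) \<le>
             sqrt (inf_norm (inv_mat (1\<^sub>m n - B))) * sqrt (inf_norm (inv_mat (1\<^sub>m n - C)))"
    if mx: "max rB rC < 1"
  proof -
    have rB1: "rB < 1" and rC1: "rC < 1" using mx by auto
    have "sqrt rB * sqrt rC = sqrt (rB * rC)" by (simp add: real_sqrt_mult)
    also have "rB * rC \<le> rB * 1" using rB0 rC1 by (intro mult_left_mono) auto
    then have "sqrt (rB * rC) < 1" using rB1 by simp
    finally have rA1: "rA < 1" using P1 by simp
    have MA: "1\<^sub>m n - A \<in> carrier_mat n n" using A by auto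
    have MB: "1\<^sub>m n - B \<in> carrier_mat n n" using B by auto
    have MC: "1\<^sub>m n - C \<in> carrier_mat n n" using C by auto
    obtain XA where XA: "XA \<in> carrier_mat n n" "(1\<^sub>m n - A) * XA = 1\<^sub>m n" "XA * (1\<^sub>m n - A) = 1\<^sub>m n"
      using det_inverse[OF MA invertible_lt1[OF A n]] rA1 unfolding rA_def by auto
    obtain XB where XB: "XB \<in> carrier_mat n n" "(1\<^sub>m n - B) * XB = 1\<^sub>m n" "XB * (1\<^sub>m n - B) = 1\<^sub>m n"
      using det_inverse[OF MB real_det_ne0[OF B n]] rB1 unfolding rB_def by auto
    obtain XC where XC: "XC \<in> carrier_mat n n" "(1\<^sub>m n - C) * XC = 1\<^sub>m n" "XC * (1\<^sub>m n - C) = 1\<^sub>m n"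
      using det_inverse[OF MC real_det_ne0[OF C n]] rC1 unfolding rC_def by auto
    have iA: "inv_mat (1\<^sub>m n - A) = XA" by (rule inv_mat_eq[OF MA XA])
    have iB: "inv_mat (1\<^sub>m n - B) = XB" by (rule inv_mat_eq[OF MB XB])
    have iC: "inv_mat (1\<^sub>m n - C) = XC" by (rule inv_mat_eq[OF MC XC])
    obtain cA where cA: "\<forall>k i j. i < n \<longrightarrow> j < n \<longrightarrow> norm ((A ^\<^sub>m k) $$ (i, j)) \<le> cA * ((rA + 1) / 2) ^ k"
      using decay[OF A n, of "(rA + 1) / 2"] rA1 unfolding rA_def by auto
    obtain cB where cB: "\<forall>k i j. i < n \<longrightarrow> j < n \<longrightarrow> norm ((B ^\<^sub>m k) $$ (i, j)) \<le> cB * ((rB + 1) / 2) ^ k"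
      using real_decay[OF B n, of "(rB + 1) / 2"] rB1 unfolding rB_def by auto
    obtain cC where cC: "\<forall>k i j. i < n \<longrightarrow> j < n \<longrightarrow> norm ((C ^\<^sub>m k) $$ (i, j)) \<le> cC * ((rC + 1) / 2) ^ k"
      using real_decay[OF C n, of "(rC + 1) / 2"] rC1 unfolding rC_def by auto
    note pb = pow_bound[OF A B C Bn Cn AB]
    have ent: "norm (XA $$ (i, j)) \<le> sqrt (XB $$ (i, j)) * sqrt (XC $$ (i, j)) \<and>
               XB $$ (i, j) \<ge> 0 \<and> XC $$ (i, j) \<ge> 0" if i: "i < n" and j: "j < n" for i j
    proof -
      have LA: "(\<lambda>N. \<Sum>k<N. (A ^\<^sub>m k) $$ (i, j)) \<longlonglongrightarrow> XA $$ (i, j)"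
        by (rule neumann[OF A XA(1) XA(2) cA _ _ i j]) (use rA0 rA1 in auto)
      have LB: "(\<lambda>N. \<Sum>k<N. (B ^\<^sub>m k) $$ (i, j)) \<longlonglongrightarrow> XB $$ (i, j)"
        by (rule neumann[OF B XB(1) XB(2) cB _ _ i j]) (use rB0 rB1 in auto)
      have LC: "(\<lambda>N. \<Sum>k<N. (C ^\<^sub>m k) $$ (i, j)) \<longlonglongrightarrow> XC $$ (i, j)"
        by (rule neumann[OF C XC(1) XC(2) cC _ _ i j]) (use rC0 rC1 in auto)
      have nB: "0 \<le> (\<Sum>k<N. (B ^\<^sub>m k) $$ (i, j))" for N using pb i j by (intro sum_nonneg) auto
      have nC: "0 \<le> (\<Sum>k<N. (C ^\<^sub>m k) $$ (i, j))" for N using pb i j by (intro sum_nonneg) auto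
      have XB0: "XB $$ (i, j) \<ge> 0" by (rule LIMSEQ_le_const[OF LB]) (use nB in auto)
      have XC0: "XC $$ (i, j) \<ge> 0" by (rule LIMSEQ_le_const[OF LC]) (use nC in auto)
      have le: "norm (\<Sum>k<N. (A ^\<^sub>m k) $$ (i, j)) \<le>
           sqrt (\<Sum>k<N. (B ^\<^sub>m k) $$ (i, j)) * sqrt (\<Sum>k<N. (C ^\<^sub>m k) $$ (i, j))" for N
      proof -
        have "norm (\<Sum>k<N. (A ^\<^sub>m k) $$ (i, j)) \<le> (\<Sum>k<N. norm ((A ^\<^sub>m k) $$ (i, j)))"
          by (rule norm_sum)
        also have "\<dots> \<le> (\<Sum>k<N. sqrt ((B ^\<^sub>m k) $$ (i, j)) * sqrt ((C ^\<^sub>m k) $$ (i, j)))"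
          using pb i j by (intro sum_mono) auto
        also have "\<dots> \<le> sqrt (\<Sum>k<N. (B ^\<^sub>m k) $$ (i, j)) * sqrt (\<Sum>k<N. (C ^\<^sub>m k) $$ (i, j))"
          using pb i j by (intro cs_sum) auto
        finally show ?thesis .
      qed
      have "norm (XA $$ (i, j)) \<le> sqrt (XB $$ (i, j)) * sqrt (XC $$ (i, j))"
        by (rule LIMSEQ_le[OF tendsto_norm[OF LA] tendsto_mult[OF tendsto_real_sqrt[OF LB] tendsto_real_sqrt[OF LC]]])
          (use le in auto)
      with XB0 XC0 show ?thesis by simp
    qed
    have nrm: "inf_norm XA \<le> sqrt (inf_norm XB) * sqrt (inf_norm XC)"
    proof -
      have "Max {(\<Sum>j<n. norm (XA $$ (i, j))) | i. i < n} \<le> sqrt (inf_norm XB) * sqrt (inf_norm XC)"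
      proof (rule Max.boundedI)
        show "finite {(\<Sum>j<n. norm (XA $$ (i, j))) | i. i < n}" by simp
        show "{(\<Sum>j<n. norm (XA $$ (i, j))) | i. i < n} \<noteq> {}" using n by auto
      next
        fix x assume "x \<in> {(\<Sum>j<n. norm (XA $$ (i, j))) | i. i < n}"
        then obtain i where i: "i < n" and x: "x = (\<Sum>j<n. norm (XA $$ (i, j)))" by auto
        have s0: "0 \<le> (\<Sum>j<n. XC $$ (i, j))" using ent i by (intro sum_nonneg) auto
        have i0: "0 \<le> inf_norm XB"
          by (rule order.trans[OF _ row_le_inf_norm[OF XB(1) i]]) (simp add: sum_nonneg)
        have "x \<le> (\<Sum>j<n. sqrt (XB $$ (i, j)) * sqrt (XC $$ (i, j)))"
          unfolding x using ent i by (intro sum_mono) auto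
        also have "\<dots> \<le> sqrt (\<Sum>j<n. XB $$ (i, j)) * sqrt (\<Sum>j<n. XC $$ (i, j))"
          using ent i by (intro cs_sum) auto
        also have "\<dots> \<le> sqrt (inf_norm XB) * sqrt (inf_norm XC)"
        proof (intro mult_mono real_sqrt_le_mono)
          have "(\<Sum>j<n. XB $$ (i, j)) = (\<Sum>j<n. norm (XB $$ (i, j)))"
            using ent i by (intro sum.cong) auto
          also have "\<dots> \<le> inf_norm XB" by (rule row_le_inf_norm[OF XB(1) i])
          finally show "(\<Sum>j<n. XB $$ (i, j)) \<le> inf_norm XB" .
          have "(\<Sum>j<n. XC $$ (i, j)) = (\<Sum>j<n. norm (XC $$ (i, j)))"
            using ent i by (intro sum.cong) auto
          also have "\<dots> \<le> inf_norm XC" by (rule row_le_inf_norm[OF XC(1) i])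
          finally show "(\<Sum>j<n. XC $$ (i, j)) \<le> inf_norm XC" .
        qed (use s0 i0 in auto)
        finally show "x \<le> sqrt (inf_norm XB) * sqrt (inf_norm XC)" .
      qed
      then show ?thesis unfolding inf_norm_def using XA(1) by simp
    qed
    show ?thesis
      using rA1 nrm iA iB iC invertible_from[OF MA XA] invertible_from[OF MB XB] invertible_from[OF MC XC]
      by simp
  qed
  show ?thesis using P1 P2 unfolding rA_def rB_def rC_def by blast
qed

end
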